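(* Let $p$ be an odd prime, $n\ge 1$, and let $f,g:\mathbb{F}_{p^n}\to\mathbb{F}_{p^n}$ both be planar Dembowski–Ostrom functions. Then $f$ and $g$ are EA-equivalent if and only if $f$ and $g$ are linear equivalent.
   Context: A function $f:\mathbb{F}_{p^n}\to\mathbb{F}_{p^n}$ is planar if for every $a\in\mathbb{F}_{p^n}^*$ the map $x\mapsto f(x+a)-f(x)$ is a bijection of $\mathbb{F}_{p^n}$. A Dembowski–Ostrom (DO) function is one given by a polynomial of the form $\sum_{i,j}a_{ij}x^{p^i+p^j}$ with $a_{ij}\in\mathbb{F}_{p^n}$. A function is affine if it is the sum of a constant and a linearized polynomial $\sum_i c_i x^{p^i}$ over $\mathbb{F}_{p^n}$. Two functions $f,g$ are EA-equivalent if $g=l_1\circ f\circ l_2+l_3$ with $l_1,l_2,l_3$ affine and $l_1,l_2$ permutations of $\mathbb{F}_{p^n}$; they are linear equivalent if $g=l_1\circ f\circ l_2$ with $l_1,l_2$ linearized permutation polynomials (i.e. $\mathbb{F}_p$-linear bijections). *)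

theory Defs
  imports Main "HOL-Computational_Algebra.Primes"
begin

definition planar :: "('a::field \<Rightarrow> 'a) \<Rightarrow> bool" where
  "planar f \<longleftrightarrow> (\<forall>a. a \<noteq> 0 \<longrightarrow> bij (\<lambda>x. f (x + a) - f x))"

definition DO_fun :: "nat \<Rightarrow> ('a::field \<Rightarrow> 'a) \<Rightarrow> bool" where
  "DO_fun p f \<longleftrightarrow> (\<exists>(N::nat) (a::nat \<Rightarrow> nat \<Rightarrow> 'a).
      f = (\<lambda>x. \<Sum>i<N. \<Sum>j<N. a i j * x ^ (p ^ i + p ^ j)))"

definition linearized :: "nat \<Rightarrow> ('a::field \<Rightarrow> 'a) \<Rightarrow> bool" where
  "linearized p l \<longleftrightarrow> (\<exists>(N::nat) (c::nat \<Rightarrow> 'a). l = (\<lambda>x. \<Sum>i<N. c i * x ^ (p ^ i)))"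

definition affine_fun :: "nat \<Rightarrow> ('a::field \<Rightarrow> 'a) \<Rightarrow> bool" where
  "affine_fun p l \<longleftrightarrow> (\<exists>c L. linearized p L \<and> l = (\<lambda>x. c + L x))"

definition EA_equivalent :: "nat \<Rightarrow> ('a::field \<Rightarrow> 'a) \<Rightarrow> ('a \<Rightarrow> 'a) \<Rightarrow> bool" where
  "EA_equivalent p f g \<longleftrightarrow> (\<exists>l1 l2 l3. affine_fun p l1 \<and> affine_fun p l2 \<and> affine_fun p l3
      \<and> bij l1 \<and> bij l2 \<and> g = (\<lambda>x. l1 (f (l2 x)) + l3 x))"

definition linear_equivalent :: "nat \<Rightarrow> ('a::field \<Rightarrow> 'a) \<Rightarrow> ('a \<Rightarrow> 'a) \<Rightarrow> bool" where
  "linear_equivalent p f g \<longleftrightarrow> (\<exists>l1 l2. linearized p l1 \<and> linearized p l2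
      \<and> bij l1 \<and> bij l2 \<and> g = l1 \<circ> f \<circ> l2)"

end

theory Submission
  imports Defs "HOL-Number_Theory.Residues"
begin

lemma char_eq:
  assumes "prime p" "card (UNIV :: 'a::{field,finite} set) = p ^ n"
  shows "CHAR('a) = p"
proof -
  have pos: "CHAR('a) > 0" by (rule finite_imp_CHAR_pos) simp
  have pr: "prime CHAR('a)" using prime_CHAR_semidom[OF pos] .
  have "CHAR('a) dvd p ^ n" using CHAR_dvd_CARD[where 'a='a] assms(2) by simp
  hence "CHAR('a) dvd p" using pr prime_dvd_power by blast
  thus ?thesis using pr assms(1) primes_dvd_imp_eq by blast
qed

lemma par_aux: "((A::'a::comm_ring_1)+B)*(C+D) + (A-B)*(C-D) = 2*(A*C) + 2*(B*D)"
  by (simp add: algebra_simps mult_2)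

context
  fixes p :: nat
  assumes ch: "CHAR('a::{field,finite}) = p" and pp: "prime p" and op: "odd p"
begin

lemma frob_add: "((x::'a) + y) ^ (p ^ i) = x ^ (p ^ i) + y ^ (p ^ i)"
  by (rule freshmans_dream') (use ch pp in auto)

lemma frob_neg: "(- (x::'a)) ^ (p ^ i) = - (x ^ (p ^ i))"
  using op by (simp add: power_minus_odd)

lemma two_nz: "(2::'a) \<noteq> 0"
proof
  assume "(2::'a) = 0"
  hence "of_nat 2 = (0::'a)" by simp
  hence "p dvd 2" using of_nat_eq_0_iff_char_dvd ch by metis
  hence "p \<le> 2" by (rule dvd_imp_le) simp
  moreover have "p \<ge> 2" using pp prime_ge_2_nat by blast
  ultimately have "p = 2" by simp
  thus False using op by simp
qed

lemma lin_add: "linearized p L \<Longrightarrow> L ((x::'a) + y) = L x + L y"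
  unfolding linearized_def
  by (auto simp: frob_add distrib_left sum.distrib)

lemma lin_neg: "linearized p L \<Longrightarrow> L (- (x::'a)) = - L x"
  unfolding linearized_def
  by (auto simp: frob_neg sum_negf)

lemma lin_zero: "linearized p L \<Longrightarrow> L (0::'a) = 0"
proof -
  assume a: "linearized p L"
  have "L 0 + 0 = L 0 + L 0" using lin_add[OF a, of 0 0] by simp
  thus ?thesis by (metis add_left_imp_eq)
qed

lemma DO_zero: "DO_fun p f \<Longrightarrow> f (0::'a) = 0"
proof -
  have "p ^ i + p ^ j \<noteq> 0" for i j using pp by (simp add: prime_gt_0_nat)
  moreover assume "DO_fun p f"
  ultimately show ?thesis unfolding DO_fun_def by (auto simp del: power_0_left simp add: zero_power)
qed

lemma DO_even: "DO_fun p f \<Longrightarrow> f (- (x::'a)) = f x"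
proof -
  have e: "even (p ^ i + p ^ j)" for i j using op by simp
  assume "DO_fun p f"
  then show ?thesis unfolding DO_fun_def
    using e by (auto simp: power_minus_even intro!: sum.cong)
qed

lemma mono_par: "((c::'a) + y) ^ (p ^ i + p ^ j) + (c - y) ^ (p ^ i + p ^ j)
   = 2 * c ^ (p ^ i + p ^ j) + 2 * y ^ (p ^ i + p ^ j)"
proof -
  have h: "(c - y) ^ (p ^ k) = c ^ (p ^ k) - y ^ (p ^ k)" for k
    using frob_add[of c "-y" k] frob_neg[of y k] by simp
  have 1: "(c + y) ^ (p ^ i + p ^ j) = (c ^ p ^ i + y ^ p ^ i) * (c ^ p ^ j + y ^ p ^ j)"
    by (simp only: power_add frob_add)
  have 2: "(c - y) ^ (p ^ i + p ^ j) = (c ^ p ^ i - y ^ p ^ i) * (c ^ p ^ j - y ^ p ^ j)"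
    by (simp only: power_add h)
  show ?thesis unfolding 1 2 power_add[of c] power_add[of y] by (rule par_aux)
qed

lemma DO_par: "DO_fun p f \<Longrightarrow> f ((c::'a) + y) + f (c - y) = 2 * f c + 2 * f y"
proof -
  assume "DO_fun p f"
  then obtain N a where fe: "f = (\<lambda>x. \<Sum>i<N. \<Sum>j<N. a i j * x ^ (p ^ i + p ^ j))"
    unfolding DO_fun_def by blast
  have "f (c + y) + f (c - y) = (\<Sum>i<N. \<Sum>j<N. a i j * ((c + y) ^ (p ^ i + p ^ j) + (c - y) ^ (p ^ i + p ^ j)))"
    unfolding fe by (simp only: sum.distrib distrib_left)
  also have "\<dots> = (\<Sum>i<N. \<Sum>j<N. a i j * (2 * c ^ (p ^ i + p ^ j) + 2 * y ^ (p ^ i + p ^ j)))"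
    by (simp only: mono_par)
  also have "\<dots> = 2 * f c + 2 * f y"
    unfolding fe by (simp only: sum.distrib distrib_left sum_distrib_left mult.left_commute)
  finally show ?thesis .
qed

end

theorem lemma1:
  fixes f g :: "'a::{field,finite} \<Rightarrow> 'a" and p n :: nat
  assumes "prime p" and "odd p" and "n \<ge> 1" and "card (UNIV :: 'a set) = p ^ n"
    and "planar f" and "DO_fun p f" and "planar g" and "DO_fun p g"
  shows "EA_equivalent p f g \<longleftrightarrow> linear_equivalent p f g"
proof
  have ch: "CHAR('a) = p" using char_eq assms(1,4) by blast
  note ctx = ch assms(1,2)
  assume "EA_equivalent p f g"
  then obtain l1 l2 l3 where a1: "affine_fun p l1" and a2: "affine_fun p l2" and a3: "affine_fun p l3"
    and b1: "bij l1" and b2: "bij l2" and geq: "g = (\<lambda>x. l1 (f (l2 x)) + l3 x)"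
    unfolding EA_equivalent_def by blast
  obtain c1 L1 where L1: "linearized p L1" and l1: "l1 = (\<lambda>x. c1 + L1 x)"
    using a1 unfolding affine_fun_def by blast
  obtain c2 L2 where L2: "linearized p L2" and l2: "l2 = (\<lambda>x. c2 + L2 x)"
    using a2 unfolding affine_fun_def by blast
  obtain c3 L3 where L3: "linearized p L3" and l3: "l3 = (\<lambda>x. c3 + L3 x)"
    using a3 unfolding affine_fun_def by blast
  have bL1: "bij L1"
  proof -
    have "L1 = (\<lambda>z. z - c1) \<circ> l1" using l1 by auto
    moreover have "bij (\<lambda>z::'a. z - c1)"
      by (rule bij_betwI[where g="\<lambda>z. z + c1"]) auto
    ultimately show ?thesis using b1 bij_comp by (metis (no_types))
  qed
  have bL2: "bij L2"
  proof -
    have "L2 = (\<lambda>z. z - c2) \<circ> l2" using l2 by auto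
    moreover have "bij (\<lambda>z::'a. z - c2)"
      by (rule bij_betwI[where g="\<lambda>z. z + c2"]) auto
    ultimately show ?thesis using b2 bij_comp by (metis (no_types))
  qed
  have gx: "g x = c1 + L1 (f (c2 + L2 x)) + (c3 + L3 x)" for x
    by (simp only: geq l1 l2 l3)
  have g0: "c1 + L1 (f c2) + c3 = 0"
    using gx[of 0] unfolding DO_zero[OF ctx assms(8)] lin_zero[OF ctx L2] lin_zero[OF ctx L3] add_0_right
    by (rule sym)
  have "g x = L1 (f (L2 x))" for x
  proof -
    define y where "y = L2 x"
    have gm: "g (- x) = c1 + L1 (f (c2 - y)) + (c3 - L3 x)"
      unfolding gx[of "-x"] lin_neg[OF ctx L2] lin_neg[OF ctx L3] y_def diff_conv_add_uminus by (rule refl)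
    have ev: "g (- x) = g x" using DO_even[OF ctx assms(8)] .
    have "g x + g (- x) = 2 * c1 + 2 * c3 + L1 (f (c2 + y) + f (c2 - y))"
    proof -
      have gx': "g x = c1 + L1 (f (c2 + y)) + (c3 + L3 x)" unfolding y_def by (rule gx)
      have aux: "c1 + a + (c3 + l) + (c1 + b + (c3 - l)) = 2*c1 + 2*c3 + (a + b)" for a b l :: 'a
        unfolding mult_2 diff_conv_add_uminus by (simp only: ac_simps add.right_inverse add_0_right add_0_left add.left_inverse)
      show ?thesis unfolding gx' gm lin_add[OF ctx L1] by (rule aux)
    qed
    also have "\<dots> = 2 * c1 + 2 * c3 + L1 (2 * f c2 + 2 * f y)"
      by (simp only: DO_par[OF ctx assms(6)])
    also have "\<dots> = 2 * (c1 + L1 (f c2) + c3) + 2 * L1 (f y)"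
    proof -
      have m: "L1 (2 * a) = 2 * L1 a" for a unfolding mult_2 by (rule lin_add[OF ctx L1])
      have aux: "2*c1 + 2*c3 + (2*a + 2*b) = 2*(c1 + a + c3) + 2*b" for a b :: 'a
        unfolding mult_2 by (simp only: ac_simps)
      show ?thesis by (simp only: lin_add[OF ctx L1] m) (rule aux)
    qed
    finally have "g x + g (- x) = 2 * (c1 + L1 (f c2) + c3) + 2 * L1 (f y)" .
    hence "g x + g x = 2 * 0 + 2 * L1 (f y)" by (simp only: g0 ev)
    hence "2 * g x = 2 * L1 (f y)" by (simp only: mult_2 mult_zero_right add_0_left)
    hence "g x = L1 (f y)" using mult_left_cancel[OF two_nz[OF ctx]] by blast
    thus ?thesis unfolding y_def .
  qed
  hence "g = L1 \<circ> f \<circ> L2" by (intro ext) (simp only: comp_apply)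
  thus "linear_equivalent p f g" unfolding linear_equivalent_def using L1 L2 bL1 bL2 by blast
next
  assume "linear_equivalent p f g"
  then obtain L1 L2 where L: "linearized p L1" "linearized p L2" "bij L1" "bij L2"
    and geq: "g = L1 \<circ> f \<circ> L2" unfolding linear_equivalent_def by blast
  have z: "linearized p (\<lambda>x::'a. 0)" unfolding linearized_def
    by (rule exI[of _ 0]) simp
  have af: "affine_fun p L" if "linearized p L" for L :: "'a \<Rightarrow> 'a"
    unfolding affine_fun_def
    by (rule exI[of _ 0], rule exI[of _ L]) (simp add: that)
  have "affine_fun p L1" "affine_fun p L2" "affine_fun p (\<lambda>x::'a. 0)"
    using af L z by auto
  moreover have "g = (\<lambda>x. L1 (f (L2 x)) + 0)" using geq by auto
  ultimately show "EA_equivalent p f g" unfolding EA_equivalent_def using L by blast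
qed

end
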